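(* Let $k$ be a field with a fixed algebraic closure $\overline{k}$, and let $l/k$ be a finite extension inside $\overline{k}$ which is normal and simple (generated by a single element). Then for every integer $N$ there exists $n\ge N$ and a hypersurface $H\subseteq\mathbf{P}^n_k$ which is an $l$-normic form.
   Context: All finite extensions of $k$ are considered as subfields of the fixed algebraic closure $\overline{k}$. A hypersurface $H\subseteq\mathbf{P}^n_k$ is an $l$-normic form if for every finite extension $k'/k$ inside $\overline{k}$, one has $H(k')\ne\emptyset$ if and only if $l\subseteq k'$. *)

theory Defs
  imports "HOL-Computational_Algebra.Polynomial"
begin

text \<open>Fields are modelled as subfields of an ambient field type 'a, which plays
the role of the fixed algebraic closure of k.\<close>

definition subfield :: "'a::field set \<Rightarrow> bool" where
  "subfield F \<longleftrightarrow> 0 \<in> F \<and> 1 \<in> F \<and>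
     (\<forall>x\<in>F. \<forall>y\<in>F. x + y \<in> F \<and> x - y \<in> F \<and> x * y \<in> F) \<and>
     (\<forall>x\<in>F. x \<noteq> 0 \<longrightarrow> inverse x \<in> F)"

definition poly_over :: "'a::field set \<Rightarrow> 'a poly \<Rightarrow> bool" where
  "poly_over F p \<longleftrightarrow> (\<forall>i. coeff p i \<in> F)"

definition alg_closed_type :: "'a::field itself \<Rightarrow> bool" where
  "alg_closed_type _ \<longleftrightarrow> (\<forall>p :: 'a poly. degree p \<ge> 1 \<longrightarrow> (\<exists>x. poly p x = 0))"

definition algebraic_over :: "'a::field set \<Rightarrow> 'a \<Rightarrow> bool" where
  "algebraic_over k x \<longleftrightarrow> (\<exists>p. p \<noteq> 0 \<and> poly_over k p \<and> poly p x = 0)"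

definition finite_ext :: "'a::field set \<Rightarrow> 'a set \<Rightarrow> bool" where
  "finite_ext k k' \<longleftrightarrow> subfield k' \<and> k \<subseteq> k' \<and>
     (\<exists>B. finite B \<and> B \<subseteq> k' \<and> k' = {\<Sum>b\<in>B. c b * b | c. \<forall>b\<in>B. c b \<in> k})"

definition irreducible_over :: "'a::field set \<Rightarrow> 'a poly \<Rightarrow> bool" where
  "irreducible_over k p \<longleftrightarrow> poly_over k p \<and> degree p \<ge> 1 \<and>
     \<not> (\<exists>q r. poly_over k q \<and> poly_over k r \<and> degree q \<ge> 1 \<and> degree r \<ge> 1 \<and> p = q * r)"

definition normal_ext :: "'a::field set \<Rightarrow> 'a set \<Rightarrow> bool" where
  "normal_ext k l \<longleftrightarrow> (\<forall>p. irreducible_over k p \<longrightarrow> (\<exists>x\<in>l. poly p x = 0) \<longrightarrow>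
       (\<forall>x. poly p x = 0 \<longrightarrow> x \<in> l))"

definition gen_field :: "'a::field set \<Rightarrow> 'a \<Rightarrow> 'a set" where
  "gen_field k \<theta> = \<Inter>{F. subfield F \<and> k \<subseteq> F \<and> \<theta> \<in> F}"

definition simple_ext :: "'a::field set \<Rightarrow> 'a set \<Rightarrow> bool" where
  "simple_ext k l \<longleftrightarrow> (\<exists>\<theta>. l = gen_field k \<theta>)"

text \<open>A form in variables x_0..x_n over k is given by its coefficient function
c on exponent vectors (functions nat \<Rightarrow> nat).\<close>
definition hypersurface_form :: "'a::field set \<Rightarrow> nat \<Rightarrow> nat \<Rightarrow> ((nat \<Rightarrow> nat) \<Rightarrow> 'a) \<Rightarrow> bool" where
  "hypersurface_form k n d c \<longleftrightarrow> d \<ge> 1 \<and> finite {\<alpha>. c \<alpha> \<noteq> 0} \<and> (\<exists>\<alpha>. c \<alpha> \<noteq> 0) \<and>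
     (\<forall>\<alpha>. c \<alpha> \<in> k) \<and>
     (\<forall>\<alpha>. c \<alpha> \<noteq> 0 \<longrightarrow> (\<forall>i>n. \<alpha> i = 0) \<and> (\<Sum>i\<le>n. \<alpha> i) = d)"

definition eval_form :: "nat \<Rightarrow> ((nat \<Rightarrow> nat) \<Rightarrow> 'a::field) \<Rightarrow> (nat \<Rightarrow> 'a) \<Rightarrow> 'a" where
  "eval_form n c x = (\<Sum>\<alpha>\<in>{\<alpha>. c \<alpha> \<noteq> 0}. c \<alpha> * (\<Prod>i\<le>n. x i ^ \<alpha> i))"

text \<open>H(k') \<noteq> \<emptyset>: a point of P^n with homogeneous coordinates in k' on which the form vanishes.\<close>
definition has_point :: "nat \<Rightarrow> ((nat \<Rightarrow> nat) \<Rightarrow> 'a::field) \<Rightarrow> 'a set \<Rightarrow> bool" where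
  "has_point n c k' \<longleftrightarrow> (\<exists>x. (\<forall>i\<le>n. x i \<in> k') \<and> (\<exists>i\<le>n. x i \<noteq> 0) \<and> eval_form n c x = 0)"

definition normic_form :: "'a::field set \<Rightarrow> 'a set \<Rightarrow> nat \<Rightarrow> ((nat \<Rightarrow> nat) \<Rightarrow> 'a) \<Rightarrow> bool" where
  "normic_form k l n c \<longleftrightarrow> (\<forall>k'. finite_ext k k' \<longrightarrow> (has_point n c k' \<longleftrightarrow> l \<subseteq> k'))"

end

theory Submission
  imports Defs "HOL-Algebra.Algebraic_Closure_Type"
begin

hide_const (open) Subrings.subfield Polynomials.degree up_ring.coeff Polynomials.lead_coeff

abbreviation RR :: "'a::field ring" where "RR \<equiv> ring_of_type_algebra"

lemma RR_simps [simp]: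
  "carrier (RR::'a::field ring) = UNIV"
  "x \<otimes>\<^bsub>(RR::'a ring)\<^esub> y = x * y"
  "x \<oplus>\<^bsub>(RR::'a ring)\<^esub> y = x + y"
  "\<one>\<^bsub>(RR::'a ring)\<^esub> = 1"
  "\<zero>\<^bsub>(RR::'a ring)\<^esub> = 0"
  by (auto simp: ring_of_type_algebra_def)

lemma RRf: "field (RR::'a::field ring)" by rule
lemma RRd: "domain (RR::'a::field ring)" using RRf field.axioms(1) by blast
lemma RRr: "ring (RR::'a::field ring)" using RRd domain_def cring.axioms(1) by blast

lemma RR_pow [simp]: "x [^]\<^bsub>(RR::'a::field ring)\<^esub> (n::nat) = x ^ n"
  by (induct n) (auto simp: ring_of_type_algebra_def)

lemma RR_minus [simp]: "\<ominus>\<^bsub>(RR::'a::field ring)\<^esub> x = - x"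
  by (rule abelian_group.minus_equality[OF ring.is_abelian_group[OF RRr]]) auto

lemma RR_inv [simp]: "(x::'a::field) \<noteq> 0 \<Longrightarrow> inv\<^bsub>RR\<^esub> x = inverse x"
  by (rule comm_monoid.comm_inv_char[OF cring.axioms(2)[OF domain.axioms(1)[OF RRd]]]) auto

lemma sub_to_alg: "subfield (k::'a::field set) \<Longrightarrow> Subrings.subfield k RR"
proof -
  assume k: "subfield k"
  have m: "\<And>h. h \<in> k \<Longrightarrow> - h \<in> k"
    using k unfolding Defs.subfield_def by (metis diff_0)
  have "subring k RR"
    by (rule ring.subringI[OF RRr]) (use k m in \<open>auto simp: Defs.subfield_def\<close>)
  moreover have "\<And>x. x \<in> k - {\<zero>\<^bsub>RR\<^esub>} \<Longrightarrow> inv\<^bsub>RR\<^esub> x \<in> k"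
    using k unfolding Defs.subfield_def by simp
  ultimately show ?thesis by (rule field.subfieldI'[OF RRf])
qed

lemma sub_to_ring: "subfield (k::'a::field set) \<Longrightarrow> subring k RR"
  using sub_to_alg Subrings.subfieldE(1) by blast

lemma alg_to_sub: "Subrings.subfield (K::'a::field set) RR \<Longrightarrow> subfield K"
proof -
  assume K: "Subrings.subfield K RR"
  have s: "subring K RR" using K Subrings.subfieldE(1) by blast
  have "\<And>x. x \<in> K \<Longrightarrow> x \<noteq> 0 \<Longrightarrow> inverse x \<in> K"
    using ring.subfield_m_inv(1)[OF RRr K] by fastforce
  moreover have "\<And>x y. x \<in> K \<Longrightarrow> y \<in> K \<Longrightarrow> x - y \<in> K"
    using subringE(5,7)[OF s] by (metis RR_minus RR_simps(3) diff_conv_add_uminus)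
  ultimately show ?thesis unfolding Defs.subfield_def
    using subringE(2,3,6,7)[OF s] by auto
qed

lemma eval_single: "ring.eval (RR::'a::field ring) [a] x = a"
proof -
  have e0: "ring.eval (RR::'a ring) [] x = 0" by (simp add: ring.eval.simps(1)[OF RRr])
  show ?thesis using ring.eval.simps(2)[OF RRr, of a "[]"] e0 by simp
qed

lemma eval_rc: "ring.eval (RR::'a::field ring) (rev (coeffs q)) x = poly q x"
proof (induct q rule: pCons_induct)
  case 0
  then show ?case by (simp add: ring.eval.simps(1)[OF RRr])
next
  case (pCons a q)
  have "coeffs (pCons a q) = a # coeffs q" using pCons(1) by (auto simp: cCons_def)
  then have "ring.eval (RR::'a::field ring) (rev (coeffs (pCons a q))) x
     = ring.eval RR (rev (coeffs q)) x * x + a"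
    using ring.eval_append[OF RRr, of "rev (coeffs q)" "[a]" x]
    by (simp add: eval_single)
  then show ?case using pCons(2) by (simp add: algebra_simps)
qed

lemma rc_carrier:
  assumes "poly_over k q"
  shows "rev (coeffs q) \<in> carrier (k[X]\<^bsub>(RR::'a::field ring)\<^esub>)"
proof -
  have "set (coeffs q) \<subseteq> range (coeff q)" by (auto simp: coeffs_def)
  then have s: "set (rev (coeffs q)) \<subseteq> k" using assms unfolding poly_over_def by auto
  show ?thesis
  proof (cases "q = 0")
    case True
    then show ?thesis unfolding univ_poly_carrier[symmetric] polynomial_def by simp
  next
    case False
    then have "hd (rev (coeffs q)) \<noteq> 0"
      by (simp add: hd_rev last_coeffs_eq_coeff_degree)
    then show ?thesis using s unfolding univ_poly_carrier[symmetric] polynomial_def by simp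
  qed
qed

lemma rc_degree: "Polynomials.degree (rev (coeffs q)) = degree q"
proof (cases "q = 0")
  case False
  then show ?thesis by (simp add: length_coeffs)
qed simp

lemma rc_Poly:
  assumes "p \<in> carrier (k[X]\<^bsub>(RR::'a::field ring)\<^esub>)"
  shows "rev (coeffs (Poly (rev p))) = p"
proof (cases "p = []")
  case False
  then have "hd p \<noteq> 0" using assms unfolding univ_poly_carrier[symmetric] polynomial_def by simp
  have r: "rev p = rev (tl p) @ [hd p]" using False by (cases p) auto
  have "strip_while ((=) 0) (rev (tl p) @ [hd p]) = rev (tl p) @ [hd p]"
    using \<open>hd p \<noteq> 0\<close> by (simp only: strip_while_snoc) simp
  then have "strip_while ((=) 0) (rev p) = rev p" using r by simp
  then show ?thesis by (simp add: coeffs_Poly)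
qed simp

lemma alg_conv:
  assumes k: "subfield (k::'a::field set)" and a: "algebraic_over k x"
  shows "(ring.algebraic RR over k) x"
proof -
  obtain p where p: "p \<noteq> 0" "poly_over k p" "poly p x = 0"
    using a unfolding algebraic_over_def by blast
  show ?thesis
    apply (rule ring.algebraicI[OF RRr, of "rev (coeffs p)"])
    using rc_carrier[OF p(2)] p(1,3) eval_rc[of p x] by auto
qed

locale keyctx =
  fixes k :: "'a::field set" and \<theta> :: 'a
  assumes k: "subfield k" and alg: "\<forall>x. algebraic_over k x"
begin

definition I where "I = ring.Irr RR k \<theta>"
definition f where "f = Poly (rev I)"

lemma kA: "Subrings.subfield k RR" using sub_to_alg[OF k] .
lemma kR: "subring k RR" using sub_to_ring[OF k] .

lemma algA: "(ring.algebraic RR over k) x" using alg_conv[OF k] alg by blast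

lemma IrrP: "I \<in> carrier (k[X]\<^bsub>RR\<^esub>)" "ring_irreducible\<^bsub>(k[X]\<^bsub>RR\<^esub>)\<^esub> I"
   "Polynomials.lead_coeff I = 1" "ring.eval RR I \<theta> = 0"
  using domain.IrrE[OF RRd kA _ algA, of \<theta>] unfolding I_def by auto

lemma I_ne: "I \<noteq> []"
  using IrrP(2) unfolding ring_irreducible_def univ_poly_zero by auto

lemma rcf: "rev (coeffs f) = I" unfolding f_def using rc_Poly[OF IrrP(1)] .

lemma poly_f: "poly f x = ring.eval RR I x" using eval_rc[of f x] rcf by simp

lemma f_ne: "f \<noteq> 0" using rcf I_ne by auto

lemma f_over: "poly_over k f"
proof -
  have "set I \<subseteq> k" using IrrP(1) I_ne unfolding univ_poly_carrier[symmetric] polynomial_def by auto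
  then have "set (coeffs f) \<subseteq> k" using rcf by (metis set_rev)
  moreover have "0 \<in> k" using k unfolding Defs.subfield_def by auto
  ultimately show ?thesis unfolding poly_over_def
  proof (intro allI)
    fix i
    assume sk: "set (coeffs f) \<subseteq> k" and zk: "0 \<in> k"
    show "coeff f i \<in> k"
    proof (cases "i \<le> degree f")
      case True
      then have "coeff f i \<in> set (coeffs f)" using f_ne by (simp add: coeff_in_coeffs)
      then show ?thesis using sk by blast
    next
      case False
      then have "coeff f i = 0" by (simp add: coeff_eq_0)
      then show ?thesis using zk by simp
    qed
  qed
qed

lemma f_monic: "lead_coeff f = 1"
proof -
  have "lead_coeff f = last (coeffs f)" using f_ne by (simp add: last_coeffs_eq_coeff_degree)
  also have "\<dots> = hd I" using rcf I_ne by (metis last_rev rev_rev_ident)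
  also have "\<dots> = 1" using IrrP(3) .
  finally show ?thesis .
qed

lemma f_root: "poly f \<theta> = 0" using poly_f IrrP(4) by simp

lemma f_deg: "degree f \<ge> 1"
proof (rule ccontr)
  assume "\<not> degree f \<ge> 1"
  then have "degree f = 0" by simp
  then have "poly f \<theta> = 1" using f_monic by (simp add: poly_altdef)
  then show False using f_root by simp
qed

lemma degI: "Polynomials.degree I = degree f" using rc_degree[of f] rcf by simp

lemma f_irr: "irreducible_over k f"
  unfolding irreducible_over_def
proof (intro conjI f_over f_deg notI)
  assume "\<exists>q r. poly_over k q \<and> poly_over k r \<and> 1 \<le> degree q \<and> 1 \<le> degree r \<and> f = q * r"
  then obtain q r where qr: "poly_over k q" "poly_over k r" "1 \<le> degree q" "1 \<le> degree r" "f = q * r"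
    by blast
  have small: "\<And>q r. poly_over k q \<Longrightarrow> 1 \<le> degree q \<Longrightarrow> 1 \<le> degree r \<Longrightarrow> f = q * r \<Longrightarrow> poly q \<theta> = 0 \<Longrightarrow> False"
  proof -
    fix q r assume a: "poly_over k q" "1 \<le> degree q" "1 \<le> degree r" "f = q * r" "poly q \<theta> = 0"
    have qn: "q \<noteq> 0" "r \<noteq> 0" using a by auto
    have c: "rev (coeffs q) \<in> carrier (k[X]\<^bsub>RR\<^esub>)" using rc_carrier[OF a(1)] .
    have ne: "rev (coeffs q) \<noteq> []" using qn by simp
    have "(I pdivides\<^bsub>RR\<^esub> rev (coeffs q))"
      using domain.Irr_minimal[OF RRd kA _ algA c] a(5) eval_rc[of q \<theta>] unfolding I_def by simp
    then have "Polynomials.degree I \<le> Polynomials.degree (rev (coeffs q))"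
      using domain.pdivides_imp_degree_le[OF RRd kR IrrP(1) c ne] by simp
    then have "degree f \<le> degree q" by (metis degI rc_degree)
    moreover have "degree f = degree q + degree r" using a(4) qn by (simp add: degree_mult_eq)
    ultimately show False using a(3) by simp
  qed
  have "poly q \<theta> * poly r \<theta> = 0" using f_root qr(5) by simp
  then have "poly q \<theta> = 0 \<or> poly r \<theta> = 0" by simp
  moreover have fr: "f = r * q" using qr(5) by (simp add: mult.commute)
  ultimately show False
    using small[OF qr(1,3,4,5)] small[OF qr(2,4,3) fr] by blast
qed

lemma simpA_sub: "subring (ring.simple_extension RR k x) RR"
  using domain.simple_extension_is_subring[OF RRd kR] by simp

lemma simpA_min: "subring F RR \<Longrightarrow> k \<subseteq> F \<Longrightarrow> x \<in> F \<Longrightarrow> ring.simple_extension RR k x \<subseteq> F"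
  using domain.simple_extension_minimal[OF RRd kR, of x] by auto

lemma simpA_mem: "x \<in> ring.simple_extension RR k x"
  using ring.simple_extension_mem[OF RRr kR] by simp

lemma simpA_incl: "k \<subseteq> ring.simple_extension RR k x"
  using ring.simple_extension_incl[OF RRr] by simp

lemma gen_eq: "gen_field k x = ring.simple_extension RR k x"
proof
  have "Subrings.subfield (ring.simple_extension RR k x) RR"
    using domain.simple_extension_is_subfield[OF RRd kA] algA by simp
  then have "subfield (ring.simple_extension RR k x)" by (rule alg_to_sub)
  then show "gen_field k x \<subseteq> ring.simple_extension RR k x"
    unfolding gen_field_def using simpA_mem simpA_incl by blast
  show "ring.simple_extension RR k x \<subseteq> gen_field k x"
    unfolding gen_field_def using simpA_min sub_to_ring by blast
qed

lemma key:
  assumes r: "poly f r = 0" "r \<in> ring.simple_extension RR k \<theta>"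
  shows "\<theta> \<in> ring.simple_extension RR k r"
proof -
  have eq: "ring.Irr RR k r = I"
    unfolding ring.Irr_def[OF RRr]
    apply (rule the1_equality[OF domain.minimal_polynomial_is_unique[OF RRd kA _ algA]])
    using IrrP r(1) poly_f by auto
  have d1: "ring.dimension RR (Polynomials.degree I) k (ring.simple_extension RR k \<theta>)"
    using domain.dimension_simple_extension[OF RRd kA _ algA, of \<theta>] unfolding I_def by simp
  have d2: "ring.dimension RR (Polynomials.degree I) k (ring.simple_extension RR k r)"
    using domain.dimension_simple_extension[OF RRd kA _ algA, of r] eq by simp
  have sub: "ring.simple_extension RR k r \<subseteq> ring.simple_extension RR k \<theta>"
    using simpA_min[OF simpA_sub simpA_incl r(2)] .
  obtain Vs where Vs: "set Vs \<subseteq> carrier RR" "ring.independent RR k Vs"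
     "length Vs = Polynomials.degree I" "ring.Span RR k Vs = ring.simple_extension RR k r"
    using ring.exists_base[OF RRr kA d2] by blast
  have sV: "set Vs \<subseteq> ring.simple_extension RR k \<theta>"
    using ring.Span_base_incl[OF RRr kA Vs(1)] Vs(4) sub by auto
  have "ring.Span RR k Vs = ring.simple_extension RR k \<theta>"
    using sV ring.independent_length_eq_dimension[OF RRr kA d1 Vs(2)] Vs(3,4) sub by auto
  then show ?thesis using Vs(4) simpA_mem by auto
qed


lemma theta_l: "\<theta> \<in> gen_field k \<theta>" using gen_eq simpA_mem by simp

lemma root_iff:
  assumes "normal_ext k l" "l = gen_field k \<theta>" "subfield k'" "k \<subseteq> k'"
  shows "(\<exists>r\<in>k'. poly f r = 0) \<longleftrightarrow> l \<subseteq> k'"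
proof
  assume "\<exists>r\<in>k'. poly f r = 0"
  then obtain r where r: "r \<in> k'" "poly f r = 0" by blast
  have tl: "\<theta> \<in> l" using assms(2) theta_l by simp
  have "r \<in> l" using assms(1) f_irr tl f_root r(2) unfolding normal_ext_def by blast
  then have "r \<in> ring.simple_extension RR k \<theta>" using assms(2) gen_eq by simp
  then have "\<theta> \<in> ring.simple_extension RR k r" using key r(2) by simp
  also have "\<dots> \<subseteq> k'" by (rule simpA_min[OF sub_to_ring[OF assms(3)] assms(4) r(1)])
  finally have "\<theta> \<in> k'" .
  then show "l \<subseteq> k'" unfolding assms(2) gen_field_def using assms(3,4) by blast
next
  assume "l \<subseteq> k'"
  then show "\<exists>r\<in>k'. poly f r = 0" using assms(2) theta_l f_root by blast
qed

end



definition mon :: "nat \<Rightarrow> (nat \<Rightarrow> nat) \<Rightarrow> (nat \<Rightarrow> 'a::field) \<Rightarrow> 'a" where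
  "mon n \<alpha> x = (\<Prod>i\<le>n. x i ^ \<alpha> i)"

definition homp :: "'a::field set \<Rightarrow> nat \<Rightarrow> nat \<Rightarrow> ((nat \<Rightarrow> 'a) \<Rightarrow> 'a) set" where
  "homp k n d = {P. \<exists>c. finite {\<alpha>. c \<alpha> \<noteq> 0} \<and> (\<forall>\<alpha>. c \<alpha> \<in> k) \<and>
     (\<forall>\<alpha>. c \<alpha> \<noteq> 0 \<longrightarrow> (\<forall>i>n. \<alpha> i = 0) \<and> (\<Sum>i\<le>n. \<alpha> i) = d) \<and> P = eval_form n c}"

lemma eval_form_sup:
  assumes "finite S" "{\<alpha>. c \<alpha> \<noteq> 0} \<subseteq> S"
  shows "eval_form n c x = (\<Sum>\<alpha>\<in>S. c \<alpha> * mon n \<alpha> x)"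
  unfolding eval_form_def mon_def
  by (rule sum.mono_neutral_left) (use assms in auto)

lemma sub_0: "subfield k \<Longrightarrow> 0 \<in> k" by (simp add: Defs.subfield_def)
lemma sub_1: "subfield k \<Longrightarrow> 1 \<in> k" by (simp add: Defs.subfield_def)
lemma sub_add: "subfield k \<Longrightarrow> a \<in> k \<Longrightarrow> b \<in> k \<Longrightarrow> a + b \<in> k" by (simp add: Defs.subfield_def)
lemma sub_mult: "subfield k \<Longrightarrow> a \<in> k \<Longrightarrow> b \<in> k \<Longrightarrow> a * b \<in> k" by (simp add: Defs.subfield_def)
lemma sub_diff: "subfield k \<Longrightarrow> a \<in> k \<Longrightarrow> b \<in> k \<Longrightarrow> a - b \<in> k" by (simp add: Defs.subfield_def)
lemma sub_inv: "subfield k \<Longrightarrow> a \<in> k \<Longrightarrow> inverse a \<in> k"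
  by (cases "a = 0") (auto simp: Defs.subfield_def)
lemma sub_divide: "subfield k \<Longrightarrow> a \<in> k \<Longrightarrow> b \<in> k \<Longrightarrow> a / b \<in> k"
  by (simp add: divide_inverse sub_inv sub_mult)
lemma sub_pow: "subfield k \<Longrightarrow> a \<in> k \<Longrightarrow> a ^ m \<in> k"
  by (induct m) (auto simp: sub_1 sub_mult)
lemma sub_sum: "subfield k \<Longrightarrow> (\<And>i. i \<in> A \<Longrightarrow> g i \<in> k) \<Longrightarrow> sum g A \<in> k"
proof (induct A rule: infinite_finite_induct)
  case (infinite A) then show ?case by (simp add: sub_0)
next
  case empty then show ?case by (simp add: sub_0)
next
  case (insert a A) then show ?case by (simp add: sub_add)
qed

lemma homp_zero: "subfield k \<Longrightarrow> (\<lambda>x. 0) \<in> homp k n d"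
  unfolding homp_def
  by (rule CollectI, rule exI[of _ "\<lambda>_. 0"]) (auto simp: sub_0 eval_form_def)

lemma homp_const: assumes "subfield (k::'a::field set)" "a \<in> k" shows "(\<lambda>x. a) \<in> homp k n 0"
proof -
  define c where "c = (\<lambda>\<alpha>. if \<alpha> = (\<lambda>_::nat. 0::nat) then a else 0)"
  have sup: "{\<alpha>. c \<alpha> \<noteq> 0} \<subseteq> {\<lambda>_. 0}" unfolding c_def by auto
  have "eval_form n c x = a" for x :: "nat \<Rightarrow> 'a"
    using eval_form_sup[OF _ sup, of n x] by (simp add: c_def mon_def)
  moreover have "\<forall>\<alpha>. c \<alpha> \<in> k" using assms by (simp add: c_def sub_0)
  moreover have "\<forall>\<alpha>. c \<alpha> \<noteq> 0 \<longrightarrow> (\<forall>i>n. \<alpha> i = 0) \<and> (\<Sum>i\<le>n. \<alpha> i) = 0"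
    by (simp add: c_def)
  moreover have "finite {\<alpha>. c \<alpha> \<noteq> 0}" using sup by (rule finite_subset) simp
  ultimately show ?thesis unfolding homp_def
    by (intro CollectI exI[of _ c]) (auto simp: fun_eq_iff)
qed

lemma homp_var: assumes "subfield (k::'a::field set)" "j \<le> n" shows "(\<lambda>x. x j) \<in> homp k n 1"
proof -
  define e where "e = (\<lambda>i::nat. if i = j then 1 else (0::nat))"
  define c where "c = (\<lambda>\<alpha>. if \<alpha> = e then 1 else (0::'a))"
  have sup: "{\<alpha>. c \<alpha> \<noteq> 0} \<subseteq> {e}" unfolding c_def by auto
  have m: "mon n e x = x j" for x :: "nat \<Rightarrow> 'a"
  proof -
    have "mon n e x = (\<Prod>i\<le>n. if i = j then x i else 1)"
      unfolding mon_def e_def by (rule prod.cong) auto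
    also have "\<dots> = x j" using assms(2) by (simp add: prod.delta)
    finally show ?thesis .
  qed
  have "eval_form n c x = x j" for x :: "nat \<Rightarrow> 'a"
    using eval_form_sup[OF _ sup, of n x] by (simp add: c_def m)
  moreover have "\<forall>\<alpha>. c \<alpha> \<in> k" using assms by (simp add: c_def sub_0 sub_1)
  moreover have "(\<Sum>i\<le>n. e i) = 1" using assms(2) unfolding e_def by (simp add: sum.delta)
  then have "\<forall>\<alpha>. c \<alpha> \<noteq> 0 \<longrightarrow> (\<forall>i>n. \<alpha> i = 0) \<and> (\<Sum>i\<le>n. \<alpha> i) = 1"
    using assms(2) by (simp add: c_def e_def)
  moreover have "finite {\<alpha>. c \<alpha> \<noteq> 0}" using sup by (rule finite_subset) simp
  ultimately show ?thesis unfolding homp_def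
    by (intro CollectI exI[of _ c]) (auto simp: fun_eq_iff)
qed

lemma homp_add:
  assumes k: "subfield k" and P: "P \<in> homp k n d" and Q: "Q \<in> homp k n d"
  shows "(\<lambda>x. P x + Q x) \<in> homp k n d"
proof -
  obtain c where c: "finite {\<alpha>. c \<alpha> \<noteq> 0}" "\<forall>\<alpha>. c \<alpha> \<in> k"
     "\<forall>\<alpha>. c \<alpha> \<noteq> 0 \<longrightarrow> (\<forall>i>n. \<alpha> i = 0) \<and> (\<Sum>i\<le>n. \<alpha> i) = d" "P = eval_form n c"
    using P unfolding homp_def by blast
  obtain c' where c': "finite {\<alpha>. c' \<alpha> \<noteq> 0}" "\<forall>\<alpha>. c' \<alpha> \<in> k"
     "\<forall>\<alpha>. c' \<alpha> \<noteq> 0 \<longrightarrow> (\<forall>i>n. \<alpha> i = 0) \<and> (\<Sum>i\<le>n. \<alpha> i) = d" "Q = eval_form n c'"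
    using Q unfolding homp_def by blast
  define S where "S = {\<alpha>. c \<alpha> \<noteq> 0} \<union> {\<alpha>. c' \<alpha> \<noteq> 0}"
  have fS: "finite S" using c(1) c'(1) by (simp add: S_def)
  define c'' where "c'' = (\<lambda>\<alpha>. c \<alpha> + c' \<alpha>)"
  have sup: "{\<alpha>. c'' \<alpha> \<noteq> 0} \<subseteq> S" by (auto simp: S_def c''_def)
  have "eval_form n c'' x = P x + Q x" for x
  proof -
    have "eval_form n c'' x = (\<Sum>\<alpha>\<in>S. c'' \<alpha> * mon n \<alpha> x)" by (rule eval_form_sup[OF fS sup])
    also have "\<dots> = (\<Sum>\<alpha>\<in>S. c \<alpha> * mon n \<alpha> x) + (\<Sum>\<alpha>\<in>S. c' \<alpha> * mon n \<alpha> x)"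
      by (simp add: c''_def distrib_right sum.distrib)
    also have "\<dots> = P x + Q x"
      using eval_form_sup[OF fS, of c n x] eval_form_sup[OF fS, of c' n x] c(4) c'(4)
      by (auto simp: S_def)
    finally show ?thesis .
  qed
  moreover have "\<forall>\<alpha>. c'' \<alpha> \<in> k" using c(2) c'(2) k by (simp add: c''_def sub_add)
  moreover have "\<forall>\<alpha>. c'' \<alpha> \<noteq> 0 \<longrightarrow> (\<forall>i>n. \<alpha> i = 0) \<and> (\<Sum>i\<le>n. \<alpha> i) = d"
    using c(3) c'(3) by (metis add.right_neutral add_0 c''_def)
  ultimately show ?thesis unfolding homp_def using sup fS finite_subset
    by (intro CollectI exI[of _ c'']) (auto simp: fun_eq_iff)
qed

lemma mon_add: "mon n (\<lambda>i. \<alpha> i + \<beta> i) x = mon n \<alpha> x * mon n \<beta> x"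
  unfolding mon_def by (simp add: power_add prod.distrib)

lemma homp_mult:
  assumes k: "subfield k" and P: "P \<in> homp k n d" and Q: "Q \<in> homp k n e"
  shows "(\<lambda>x. P x * Q x) \<in> homp k n (d + e)"
proof -
  obtain c where c: "finite {\<alpha>. c \<alpha> \<noteq> 0}" "\<forall>\<alpha>. c \<alpha> \<in> k"
     "\<forall>\<alpha>. c \<alpha> \<noteq> 0 \<longrightarrow> (\<forall>i>n. \<alpha> i = 0) \<and> (\<Sum>i\<le>n. \<alpha> i) = d" "P = eval_form n c"
    using P unfolding homp_def by blast
  obtain c' where c': "finite {\<alpha>. c' \<alpha> \<noteq> 0}" "\<forall>\<alpha>. c' \<alpha> \<in> k"
     "\<forall>\<alpha>. c' \<alpha> \<noteq> 0 \<longrightarrow> (\<forall>i>n. \<alpha> i = 0) \<and> (\<Sum>i\<le>n. \<alpha> i) = e" "Q = eval_form n c'"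
    using Q unfolding homp_def by blast
  define S where "S = {\<alpha>. c \<alpha> \<noteq> 0}"
  define T where "T = {\<alpha>. c' \<alpha> \<noteq> 0}"
  define ad :: "(nat \<Rightarrow> nat) \<times> (nat \<Rightarrow> nat) \<Rightarrow> nat \<Rightarrow> nat" where "ad = (\<lambda>p i. fst p i + snd p i)"
  define c'' where "c'' = (\<lambda>\<gamma>. \<Sum>p\<in>{p \<in> S \<times> T. ad p = \<gamma>}. c (fst p) * c' (snd p))"
  define G where "G = ad ` (S \<times> T)"
  have fST: "finite (S \<times> T)" using c(1) c'(1) by (simp add: S_def T_def)
  have fG: "finite G" using fST by (simp add: G_def)
  have ne: "\<exists>p\<in>S \<times> T. ad p = \<gamma>" if "c'' \<gamma> \<noteq> 0" for \<gamma>
  proof (rule ccontr)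
    assume "\<not> (\<exists>p\<in>S \<times> T. ad p = \<gamma>)"
    then have e: "{p \<in> S \<times> T. ad p = \<gamma>} = {}" by blast
    have "c'' \<gamma> = 0" unfolding c''_def e by simp
    then show False using that by simp
  qed
  have sup: "{\<gamma>. c'' \<gamma> \<noteq> 0} \<subseteq> G"
  proof
    fix \<gamma> assume "\<gamma> \<in> {\<gamma>. c'' \<gamma> \<noteq> 0}"
    then have "\<exists>p\<in>S \<times> T. ad p = \<gamma>" using ne by blast
    then show "\<gamma> \<in> G" unfolding G_def by blast
  qed
  have "eval_form n c'' x = P x * Q x" for x
  proof -
    have "eval_form n c'' x = (\<Sum>\<gamma>\<in>G. c'' \<gamma> * mon n \<gamma> x)" by (rule eval_form_sup[OF fG sup])
    also have "\<dots> = (\<Sum>\<gamma>\<in>G. \<Sum>p\<in>{p \<in> S \<times> T. ad p = \<gamma>}. c (fst p) * c' (snd p) * mon n (ad p) x)"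
      unfolding c''_def sum_distrib_right by (rule sum.cong) auto
    also have "\<dots> = (\<Sum>p\<in>S \<times> T. c (fst p) * c' (snd p) * mon n (ad p) x)"
      by (rule sum.group[OF fST fG]) (simp add: G_def)
    also have "\<dots> = (\<Sum>p\<in>S \<times> T. (c (fst p) * mon n (fst p) x) * (c' (snd p) * mon n (snd p) x))"
      unfolding ad_def by (rule sum.cong) (auto simp: mon_add)
    also have "\<dots> = (\<Sum>\<alpha>\<in>S. c \<alpha> * mon n \<alpha> x) * (\<Sum>\<beta>\<in>T. c' \<beta> * mon n \<beta> x)"
      by (simp add: sum_product sum.cartesian_product split_beta)
    also have "\<dots> = P x * Q x"
      using c(4) c'(4) by (simp add: eval_form_def S_def T_def mon_def)
    finally show ?thesis .
  qed
  moreover have "\<forall>\<gamma>. c'' \<gamma> \<in> k"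
    using c(2) c'(2) k unfolding c''_def by (auto intro!: sub_sum sub_mult)
  moreover have "\<forall>\<gamma>. c'' \<gamma> \<noteq> 0 \<longrightarrow> (\<forall>i>n. \<gamma> i = 0) \<and> (\<Sum>i\<le>n. \<gamma> i) = d + e"
  proof (intro allI impI)
    fix \<gamma> assume "c'' \<gamma> \<noteq> 0"
    then have "\<exists>p\<in>S \<times> T. ad p = \<gamma>" using ne by blast
    then obtain \<alpha> \<beta> where ab: "\<alpha> \<in> S" "\<beta> \<in> T" "\<gamma> = (\<lambda>i. \<alpha> i + \<beta> i)"
      unfolding ad_def by auto
    then show "(\<forall>i>n. \<gamma> i = 0) \<and> (\<Sum>i\<le>n. \<gamma> i) = d + e"
      using c(3) c'(3) unfolding S_def T_def by (auto simp: sum.distrib)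
  qed
  ultimately show ?thesis unfolding homp_def using sup fG finite_subset
    by (intro CollectI exI[of _ c'']) (auto simp: fun_eq_iff)
qed

lemma homp_deg: "P \<in> homp k n d \<Longrightarrow> d = d' \<Longrightarrow> P \<in> homp k n d'" by simp

lemma homp_pow:
  assumes k: "subfield k" and P: "P \<in> homp k n d"
  shows "(\<lambda>x. P x ^ j) \<in> homp k n (j * d)"
proof (induct j)
  case 0 then show ?case using homp_const[OF k sub_1[OF k]] by simp
next
  case (Suc j)
  have "(\<lambda>x. P x * P x ^ j) \<in> homp k n (d + j * d)" by (rule homp_mult[OF k P Suc])
  then show ?case by simp
qed

lemma homp_sum:
  assumes k: "subfield k" and "finite A" and "\<And>i. i \<in> A \<Longrightarrow> g i \<in> homp k n d"
  shows "(\<lambda>x. \<Sum>i\<in>A. g i x) \<in> homp k n d"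
  using assms(2,3)
proof (induct A rule: finite_induct)
  case empty then show ?case using homp_zero[OF k] by simp
next
  case (insert a A)
  have "(\<lambda>x. g a x + (\<Sum>i\<in>A. g i x)) \<in> homp k n d"
    by (rule homp_add[OF k]) (use insert in \<open>auto simp: fun_eq_iff\<close>)
  then show ?case using insert by simp
qed

definition Fb :: "'a::field poly \<Rightarrow> 'a \<Rightarrow> 'a \<Rightarrow> 'a" where
  "Fb f u v = (\<Sum>i\<le>degree f. coeff f i * u ^ i * v ^ (degree f - i))"

lemma homp_Fb:
  assumes k: "subfield k" and f: "poly_over k f" and P: "P \<in> homp k n e" and Q: "Q \<in> homp k n e"
  shows "(\<lambda>x. Fb f (P x) (Q x)) \<in> homp k n (degree f * e)"
  unfolding Fb_def
proof (rule homp_sum[OF k])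
  fix i assume i: "i \<in> {..degree f}"
  have c: "(\<lambda>x. coeff f i) \<in> homp k n 0" using homp_const[OF k] f unfolding poly_over_def by blast
  have "(\<lambda>x. coeff f i * P x ^ i) \<in> homp k n (0 + i * e)"
    by (rule homp_mult[OF k c homp_pow[OF k P]])
  then have "(\<lambda>x. coeff f i * P x ^ i * Q x ^ (degree f - i)) \<in> homp k n ((0 + i * e) + (degree f - i) * e)"
    by (rule homp_mult[OF k _ homp_pow[OF k Q]])
  moreover have "(0 + i * e) + (degree f - i) * e = degree f * e"
    using i by (simp add: add_mult_distrib[symmetric])
  ultimately show "(\<lambda>x. coeff f i * P x ^ i * Q x ^ (degree f - i)) \<in> homp k n (degree f * e)" by simp
qed simp

lemma Fb_u0:
  assumes "lead_coeff f = 1"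
  shows "Fb f u 0 = u ^ degree f"
proof -
  have "Fb f u 0 = (\<Sum>i\<le>degree f. if i = degree f then u ^ degree f else 0)"
    unfolding Fb_def by (rule sum.cong) (use assms in auto)
  then show ?thesis by simp
qed

lemma Fb_00: "lead_coeff f = 1 \<Longrightarrow> degree f \<ge> 1 \<Longrightarrow> Fb f 0 0 = 0"
  using Fb_u0[of f 0] by simp

lemma Fb_10: "lead_coeff f = 1 \<Longrightarrow> Fb f 1 0 = 1"
  using Fb_u0[of f 1] by simp

lemma Fb_v:
  assumes "v \<noteq> 0"
  shows "Fb f u v = v ^ degree f * poly f (u / v)"
proof -
  have "v ^ degree f * poly f (u / v) = (\<Sum>i\<le>degree f. coeff f i * ((u / v) ^ i * v ^ degree f))"
    by (simp add: poly_altdef sum_distrib_left algebra_simps)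
  also have "\<dots> = (\<Sum>i\<le>degree f. coeff f i * u ^ i * v ^ (degree f - i))"
  proof (rule sum.cong)
    fix i assume "i \<in> {..degree f}"
    then have "v ^ degree f = v ^ i * v ^ (degree f - i)" by (simp add: power_add[symmetric])
    then show "coeff f i * ((u / v) ^ i * v ^ degree f) = coeff f i * u ^ i * v ^ (degree f - i)"
      using assms by (simp add: power_divide field_simps)
  qed simp
  finally show ?thesis unfolding Fb_def by simp
qed

lemma Fb_r1: "Fb f r 1 = poly f r"
  using Fb_v[of 1 f r] by simp

lemma Fb_in:
  assumes "subfield K" "\<forall>i. coeff f i \<in> K" "u \<in> K" "v \<in> K"
  shows "Fb f u v \<in> K"
  unfolding Fb_def using assms
  by (intro sub_sum) (auto intro!: sub_mult sub_pow)

lemma Fb_aniso: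
  assumes "lead_coeff f = 1" "degree f \<ge> 1" "subfield K" "\<forall>r\<in>K. poly f r \<noteq> 0"
    "u \<in> K" "v \<in> K" "Fb f u v = 0"
  shows "u = 0 \<and> v = 0"
proof (cases "v = 0")
  case True
  then show ?thesis using Fb_u0[OF assms(1), of u] assms(7) by simp
next
  case False
  then have "poly f (u / v) = 0" using Fb_v[OF False, of f u] assms(7) by simp
  moreover have "u / v \<in> K" using assms(3,5,6) by (rule sub_divide)
  ultimately show ?thesis using assms(4) by blast
qed

fun Pj :: "'a::field poly \<Rightarrow> nat \<Rightarrow> nat \<Rightarrow> (nat \<Rightarrow> 'a) \<Rightarrow> 'a" where
  "Pj f 0 s x = x s"
| "Pj f (Suc j) s x = Fb f (Pj f j s x) (Pj f j (s + 2 ^ j) x)"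

lemma homp_Pj:
  assumes k: "subfield k" and f: "poly_over k f"
  shows "s + 2 ^ j \<le> Suc n \<Longrightarrow> (\<lambda>x. Pj f j s x) \<in> homp k n (degree f ^ j)"
proof (induct j arbitrary: s)
  case 0 then show ?case using homp_var[OF k, of s n] by simp
next
  case (Suc j)
  have a: "(\<lambda>x. Pj f j s x) \<in> homp k n (degree f ^ j)" using Suc by simp
  have b: "(\<lambda>x. Pj f j (s + 2 ^ j) x) \<in> homp k n (degree f ^ j)" using Suc by simp
  show ?case using homp_Fb[OF k f a b] by simp
qed

lemma Pj_local:
  "(\<forall>i. s \<le> i \<and> i < s + 2 ^ j \<longrightarrow> x i = y i) \<Longrightarrow> Pj f j s x = Pj f j s y"
proof (induct j arbitrary: s)
  case 0 then show ?case by simp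
next
  case (Suc j)
  have "Pj f j s x = Pj f j s y" using Suc(1)[of s] Suc(2) by simp
  moreover have "Pj f j (s + 2 ^ j) x = Pj f j (s + 2 ^ j) y" using Suc(1)[of "s + 2 ^ j"] Suc(2) by simp
  ultimately show ?case by simp
qed

lemma Pj_zero:
  assumes "lead_coeff f = 1" "degree f \<ge> 1"
  shows "(\<forall>i. s \<le> i \<and> i < s + 2 ^ j \<longrightarrow> x i = 0) \<Longrightarrow> Pj f j s x = 0"
proof (induct j arbitrary: s)
  case 0 then show ?case by simp
next
  case (Suc j)
  have "Pj f j s x = 0" using Suc(1)[of s] Suc(2) by simp
  moreover have "Pj f j (s + 2 ^ j) x = 0" using Suc(1)[of "s + 2 ^ j"] Suc(2) by simp
  ultimately show ?case using Fb_00[OF assms] by simp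
qed

lemma Pj_in:
  assumes "subfield K" "\<forall>i. coeff f i \<in> K"
  shows "(\<forall>i. s \<le> i \<and> i < s + 2 ^ j \<longrightarrow> x i \<in> K) \<Longrightarrow> Pj f j s x \<in> K"
proof (induct j arbitrary: s)
  case 0 then show ?case by simp
next
  case (Suc j)
  have "Pj f j s x \<in> K" using Suc(1)[of s] Suc(2) by simp
  moreover have "Pj f j (s + 2 ^ j) x \<in> K" using Suc(1)[of "s + 2 ^ j"] Suc(2) by simp
  ultimately show ?case using Fb_in[OF assms] by simp
qed

lemma Pj_aniso:
  assumes "subfield K" "\<forall>i. coeff f i \<in> K"
    and an: "\<forall>u\<in>K. \<forall>v\<in>K. Fb f u v = 0 \<longrightarrow> u = 0 \<and> v = 0"
  shows "(\<forall>i. s \<le> i \<and> i < s + 2 ^ j \<longrightarrow> x i \<in> K) \<Longrightarrow> Pj f j s x = 0 \<Longrightarrow>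
     (\<forall>i. s \<le> i \<and> i < s + 2 ^ j \<longrightarrow> x i = 0)"
proof (induct j arbitrary: s)
  case 0
  show ?case
  proof (intro allI impI)
    fix i assume "s \<le> i \<and> i < s + 2 ^ 0"
    then have "i = s" by simp
    then show "x i = 0" using 0 by simp
  qed
next
  case (Suc j)
  have i1: "Pj f j s x \<in> K" using Pj_in[OF assms(1,2), of s j x] Suc(2) by simp
  have i2: "Pj f j (s + 2 ^ j) x \<in> K" using Pj_in[OF assms(1,2), of "s + 2 ^ j" j x] Suc(2) by simp
  have "Pj f j s x = 0 \<and> Pj f j (s + 2 ^ j) x = 0" using an i1 i2 Suc(3) by simp
  moreover have r1: "\<forall>i. s \<le> i \<and> i < s + 2 ^ j \<longrightarrow> x i \<in> K"
    using Suc(2) by simp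
  moreover have r2: "\<forall>i. s + 2 ^ j \<le> i \<and> i < s + 2 ^ j + 2 ^ j \<longrightarrow> x i \<in> K"
    using Suc(2) by simp
  ultimately have z1: "\<forall>i. s \<le> i \<and> i < s + 2 ^ j \<longrightarrow> x i = 0"
    and z2: "\<forall>i. s + 2 ^ j \<le> i \<and> i < s + 2 ^ j + 2 ^ j \<longrightarrow> x i = 0"
    using Suc(1)[of s] Suc(1)[of "s + 2 ^ j"] by blast+
  show ?case
  proof (intro allI impI)
    fix i assume a: "s \<le> i \<and> i < s + 2 ^ Suc j"
    show "x i = 0"
    proof (cases "i < s + 2 ^ j")
      case True then show ?thesis using z1 a by blast
    next
      case False then show ?thesis using z2 a by simp
    qed
  qed
qed

lemma Pj_e:
  assumes "lead_coeff f = 1" "degree f \<ge> 1"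
  shows "Pj f j s (\<lambda>i. if i = s then 1 else 0) = 1"
proof (induct j arbitrary: s)
  case 0 then show ?case by simp
next
  case (Suc j)
  have "Pj f j (s + 2 ^ j) (\<lambda>i. if i = s then 1 else 0) = 0"
    by (rule Pj_zero[OF assms]) simp
  then show ?case using Suc Fb_10[OF assms(1)] by simp
qed

lemma Pj_root:
  assumes "lead_coeff f = 1" "degree f \<ge> 1" "poly f r = 0"
  shows "Pj f (Suc j) s (\<lambda>i. if i = s then r else if i = s + 1 then 1 else 0) = 0"
proof (induct j)
  case 0 then show ?case using Fb_r1[of f r] assms(3) by simp
next
  case (Suc j)
  have "(0::nat) < 2 ^ j" by simp
  then have two: "Suc 0 < 2 * 2 ^ j" by linarith
  have "Pj f (Suc j) (s + 2 ^ Suc j) (\<lambda>i. if i = s then r else if i = s + 1 then 1 else 0) = 0"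
    by (rule Pj_zero[OF assms(1,2)]) (use two in auto)
  then show ?case using Suc Fb_00[OF assms(1,2)] by (simp del: Pj.simps(2) add: Pj.simps(2)[of f "Suc j"])
qed


theorem proposition3p3:
  fixes k l :: "'a::field set"
  assumes "alg_closed_type TYPE('a)"
    and "subfield k"
    and "\<forall>x. algebraic_over k x"
    and "finite_ext k l"
    and "normal_ext k l"
    and "simple_ext k l"
  shows "\<forall>N::int. \<exists>n::nat. int n \<ge> N \<and>
           (\<exists>d c. hypersurface_form k n d c \<and> normic_form k l n c)"
proof
  fix N :: int
  obtain \<theta> where l: "l = gen_field k \<theta>" using assms(6) unfolding simple_ext_def by blast
  interpret K: keyctx k \<theta> using assms(2,3) by unfold_locales
  define f where "f = K.f"
  have fm: "lead_coeff f = 1" unfolding f_def by (rule K.f_monic)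
  have fd: "degree f \<ge> 1" unfolding f_def by (rule K.f_deg)
  have fo: "poly_over k f" unfolding f_def by (rule K.f_over)
  have ri: "\<And>k'. subfield k' \<Longrightarrow> k \<subseteq> k' \<Longrightarrow> (\<exists>r\<in>k'. poly f r = 0) \<longleftrightarrow> l \<subseteq> k'"
    unfolding f_def using K.root_iff[OF assms(5) l] by blast
  define j where "j = Suc (nat N)"
  define n where "n = 2 ^ j - (1::nat)"
  have jl: "j < 2 ^ j" by (rule less_exp)
  have hn: "2 ^ j = Suc n" unfolding n_def using jl by simp
  have nj: "j \<le> n" using jl hn by simp
  have nN: "int n \<ge> N" using nj unfolding j_def by simp
  have n1: "1 \<le> n" using nj unfolding j_def by simp
  have "(\<lambda>x. Pj f j 0 x) \<in> homp k n (degree f ^ j)"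
    by (rule homp_Pj[OF assms(2) fo]) (simp add: hn)
  then obtain c where c: "finite {\<alpha>. c \<alpha> \<noteq> 0}" "\<forall>\<alpha>. c \<alpha> \<in> k"
     "\<forall>\<alpha>. c \<alpha> \<noteq> 0 \<longrightarrow> (\<forall>i>n. \<alpha> i = 0) \<and> (\<Sum>i\<le>n. \<alpha> i) = degree f ^ j"
     and ce: "(\<lambda>x. Pj f j 0 x) = eval_form n c"
    unfolding homp_def by blast
  have ev: "eval_form n c x = Pj f j 0 x" for x using ce by metis
  have nz: "\<exists>\<alpha>. c \<alpha> \<noteq> 0"
  proof (rule ccontr)
    assume "\<not> (\<exists>\<alpha>. c \<alpha> \<noteq> 0)"
    then have "eval_form n c (\<lambda>i. if i = 0 then 1 else 0) = 0" unfolding eval_form_def by simp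
    moreover have "Pj f j 0 (\<lambda>i. if i = 0 then 1 else 0) = 1" by (rule Pj_e[OF fm fd])
    ultimately show False using ev by simp
  qed
  have hf: "hypersurface_form k n (degree f ^ j) c"
    unfolding hypersurface_form_def using c nz fd by (simp add: one_le_power)
  have nf: "normic_form k l n c"
    unfolding normic_form_def
  proof (intro allI impI)
    fix k' assume "finite_ext k k'"
    then have k': "subfield k'" "k \<subseteq> k'" unfolding finite_ext_def by auto
    have ck: "\<forall>i. coeff f i \<in> k'" using fo k'(2) unfolding poly_over_def by blast
    show "has_point n c k' \<longleftrightarrow> l \<subseteq> k'"
    proof
      assume "has_point n c k'"
      then obtain x where x: "\<forall>i\<le>n. x i \<in> k'" "\<exists>i\<le>n. x i \<noteq> 0" "eval_form n c x = 0"
        unfolding has_point_def by blast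
      show "l \<subseteq> k'"
      proof (rule ccontr)
        assume "\<not> l \<subseteq> k'"
        then have nr: "\<forall>r\<in>k'. poly f r \<noteq> 0" using ri[OF k'] by blast
        have an: "\<forall>u\<in>k'. \<forall>v\<in>k'. Fb f u v = 0 \<longrightarrow> u = 0 \<and> v = 0"
          using Fb_aniso[OF fm fd k'(1) nr] by blast
        have xr: "\<forall>i. 0 \<le> i \<and> i < 0 + 2 ^ j \<longrightarrow> x i \<in> k'" using x(1) hn by simp
        have "Pj f j 0 x = 0" using x(3) ev by simp
        then have "\<forall>i. 0 \<le> i \<and> i < 0 + 2 ^ j \<longrightarrow> x i = 0"
          using Pj_aniso[OF k'(1) ck an xr] by blast
        then show False using x(2) hn by auto
      qed
    next
      assume "l \<subseteq> k'"
      then obtain r where r: "r \<in> k'" "poly f r = 0" using ri[OF k'] by blast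
      define x where "x = (\<lambda>i::nat. if i = 0 then r else if i = 0 + 1 then 1 else (0::'a))"
      have "Pj f (Suc (nat N)) 0 x = 0" unfolding x_def by (rule Pj_root[OF fm fd r(2)])
      then have "eval_form n c x = 0" using ev unfolding j_def by simp
      moreover have "\<forall>i\<le>n. x i \<in> k'" using r(1) k'(1) unfolding x_def by (simp add: sub_0 sub_1)
      moreover have "\<exists>i\<le>n. x i \<noteq> 0" using n1 unfolding x_def by (intro exI[of _ 1]) simp
      ultimately show "has_point n c k'" unfolding has_point_def by blast
    qed
  qed
  show "\<exists>n::nat. int n \<ge> N \<and> (\<exists>d c. hypersurface_form k n d c \<and> normic_form k l n c)"
    using nN hf nf by blast
qed

end
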